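(* Assume that $d_k < \sqrt{2}\,(p_k)^{1/2}$ for every integer $k\geq 1$ with $k\neq 4$. Then for every $n\geq 1$, $p_{n+2} < (p_n+1) + 2\sqrt2\,(p_n)^{1/2}$; that is, there are at least two primes greater than $p_n$ and less than $p_n + 1 + 2\sqrt{2p_n} = (\sqrt{p_n}+\sqrt2)^2 - 1$.
   Context: $p_k$ denotes the $k$th prime ($p_1=2$) and $d_k := p_{k+1}-p_k$. *)

theory Defs
  imports "HOL-Computational_Algebra.Primes" Complex_Main
begin

text \<open>The k-th prime, 1-indexed: pr 1 = 2, pr 2 = 3, ... . It is the least prime p
  such that exactly k primes are \<le> p. (pr 0 is a junk value and never used.)\<close>
definition pr :: "nat \<Rightarrow> nat" where
  "pr k = (LEAST p. prime p \<and> card {q. prime q \<and> q \<le> p} = k)"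

definition dgap :: "nat \<Rightarrow> nat" where
  "dgap k = pr (Suc k) - pr k"

end

theory Submission
  imports Defs
begin

definition ppi :: "nat \<Rightarrow> nat" where
  "ppi m = card {q. prime q \<and> q \<le> m}"

lemma ppi_mono: "a \<le> b \<Longrightarrow> ppi a \<le> ppi b"
  unfolding ppi_def by (rule card_mono) auto

lemma ppi_strict: "prime p \<Longrightarrow> q < p \<Longrightarrow> ppi q < ppi p"
  unfolding ppi_def
proof (rule psubset_card_mono)
  assume "prime p" "q < p"
  show "finite {qa. prime qa \<and> qa \<le> p}" by simp
  have "p \<in> {qa. prime qa \<and> qa \<le> p}" "p \<notin> {qa. prime qa \<and> qa \<le> q}" using \<open>prime p\<close> \<open>q < p\<close> by auto
  moreover have "{qa. prime qa \<and> qa \<le> q} \<subseteq> {qa. prime qa \<and> qa \<le> p}" using \<open>q < p\<close> by auto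
  ultimately show "{qa. prime qa \<and> qa \<le> q} \<subset> {qa. prime qa \<and> qa \<le> p}" by blast
qed

lemma ppi_0: "ppi 0 = 0"
proof -
  have "{q::nat. prime q \<and> q \<le> 0} = {}" by auto
  then show ?thesis unfolding ppi_def by simp
qed

lemma ppi_Suc: "ppi (Suc m) = ppi m + (if prime (Suc m) then 1 else 0)"
proof -
  have "{q. prime q \<and> q \<le> Suc m} = {q. prime q \<and> q \<le> m} \<union> (if prime (Suc m) then {Suc m} else {})"
    by (auto simp: le_Suc_eq)
  then show ?thesis unfolding ppi_def by (simp add: card_insert_if)
qed

lemma ppi_unbounded: "\<exists>m. k \<le> ppi m"
proof (induction k)
  case 0 then show ?case by simp
next
  case (Suc k)
  then obtain m where m: "k \<le> ppi m" by blast
  obtain p where p: "prime p" "m < p" using bigger_prime by blast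
  have "ppi m < ppi p" using ppi_strict[OF p] .
  then show ?case using m by (intro exI[of _ p]) simp
qed

lemma pr_props:
  assumes "k \<ge> 1"
  shows "prime (pr k) \<and> ppi (pr k) = k"
proof -
  define m where "m = (LEAST m. k \<le> ppi m)"
  have m1: "k \<le> ppi m" unfolding m_def using ppi_unbounded by (rule LeastI_ex)
  have "m \<noteq> 0"
  proof
    assume "m = 0" then show False using m1 assms ppi_0 by simp
  qed
  then obtain j where j: "m = Suc j" by (cases m) auto
  have nk: "\<not> k \<le> ppi j" using not_less_Least[of j "\<lambda>m. k \<le> ppi m"] j unfolding m_def by simp
  have pm: "prime m"
  proof (rule ccontr)
    assume "\<not> prime m"
    then have "ppi m = ppi j" using ppi_Suc[of j] j by simp
    then show False using nk m1 by simp
  qed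
  then have "ppi m = ppi j + 1" using ppi_Suc[of j] j by simp
  then have "ppi m = k" using nk m1 by simp
  then have ex: "prime m \<and> card {q. prime q \<and> q \<le> m} = k" using pm unfolding ppi_def by simp
  show ?thesis unfolding pr_def using LeastI[where P="\<lambda>p. prime p \<and> card {q. prime q \<and> q \<le> p} = k", OF ex]
    by (simp add: ppi_def)
qed

lemma pr_less: "k \<ge> 1 \<Longrightarrow> pr k < pr (Suc k)"
proof (rule ccontr)
  assume k: "k \<ge> 1" and "\<not> pr k < pr (Suc k)"
  then have "pr (Suc k) \<le> pr k" by simp
  then have "ppi (pr (Suc k)) \<le> ppi (pr k)" by (rule ppi_mono)
  then show False using pr_props[OF k] pr_props[of "Suc k"] by simp
qed

lemma pr_ppi: "prime p \<Longrightarrow> pr (ppi p) = p"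
  unfolding pr_def
proof (rule Least_equality)
  assume "prime p"
  then show "prime p \<and> card {q. prime q \<and> q \<le> p} = ppi p" by (simp add: ppi_def)
next
  fix y :: nat assume p: "prime p" and y: "prime y \<and> card {q. prime q \<and> q \<le> y} = ppi p"
  show "p \<le> y"
  proof (rule ccontr)
    assume "\<not> p \<le> y"
    then have "ppi y < ppi p" using ppi_strict[OF p] by simp
    then show False using y by (simp add: ppi_def)
  qed
qed

lemma small_primes: "q \<le> (13::nat) \<Longrightarrow> prime q \<longleftrightarrow> q \<in> {2,3,5,7,11,13}"
proof -
  assume "q \<le> 13"
  then have "q = 0 \<or> q = 1 \<or> q = 2 \<or> q = 3 \<or> q = 4 \<or> q = 5 \<or> q = 6 \<or> q = 7 \<or> q = 8 \<or> q = 9 \<or> q = 10 \<or> q = 11 \<or> q = 12 \<or> q = 13" by presburger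
  then show ?thesis by (elim disjE) (simp_all add: prime_nat_iff' flip: set_upt)
qed

lemma set5: "{q. prime q \<and> q \<le> (5::nat)} = {2,3,5}"
proof (intro set_eqI iffI)
  fix q :: nat assume "q \<in> {q. prime q \<and> q \<le> 5}"
  then have "q \<le> 13" "prime q" "q \<le> 5" by auto
  then show "q \<in> {2,3,5}" using small_primes[of q] by auto
next
  fix q :: nat assume "q \<in> {2,3,5}"
  then have "q \<le> 13" "q \<le> 5" "q \<in> {2,3,5,7,11,13}" by auto
  then show "q \<in> {q. prime q \<and> q \<le> 5}" using small_primes[of q] by auto
qed
lemma set7: "{q. prime q \<and> q \<le> (7::nat)} = {2,3,5,7}"
proof (intro set_eqI iffI)
  fix q :: nat assume "q \<in> {q. prime q \<and> q \<le> 7}"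
  then have "q \<le> 13" "prime q" "q \<le> 7" by auto
  then show "q \<in> {2,3,5,7}" using small_primes[of q] by auto
next
  fix q :: nat assume "q \<in> {2,3,5,7}"
  then have "q \<le> 13" "q \<le> 7" "q \<in> {2,3,5,7,11,13}" by auto
  then show "q \<in> {q. prime q \<and> q \<le> 7}" using small_primes[of q] by auto
qed
lemma set11: "{q. prime q \<and> q \<le> (11::nat)} = {2,3,5,7,11}"
proof (intro set_eqI iffI)
  fix q :: nat assume "q \<in> {q. prime q \<and> q \<le> 11}"
  then have "q \<le> 13" "prime q" "q \<le> 11" by auto
  then show "q \<in> {2,3,5,7,11}" using small_primes[of q] by auto
next
  fix q :: nat assume "q \<in> {2,3,5,7,11}"
  then have "q \<le> 13" "q \<le> 11" "q \<in> {2,3,5,7,11,13}" by auto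
  then show "q \<in> {q. prime q \<and> q \<le> 11}" using small_primes[of q] by auto
qed
lemma set13: "{q. prime q \<and> q \<le> (13::nat)} = {2,3,5,7,11,13}"
proof (intro set_eqI iffI)
  fix q :: nat assume "q \<in> {q. prime q \<and> q \<le> 13}"
  then have "q \<le> 13" "prime q" "q \<le> 13" by auto
  then show "q \<in> {2,3,5,7,11,13}" using small_primes[of q] by auto
next
  fix q :: nat assume "q \<in> {2,3,5,7,11,13}"
  then have "q \<le> 13" "q \<le> 13" "q \<in> {2,3,5,7,11,13}" by auto
  then show "q \<in> {q. prime q \<and> q \<le> 13}" using small_primes[of q] by auto
qed

lemma pr3: "pr 3 = 5"
proof -
  have "prime (5::nat)" using small_primes[of 5] by simp
  moreover have "ppi 5 = 3" unfolding ppi_def set5 by simp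
  ultimately show ?thesis using pr_ppi[of 5] by simp
qed
lemma pr4: "pr 4 = 7"
proof -
  have "prime (7::nat)" using small_primes[of 7] by simp
  moreover have "ppi 7 = 4" unfolding ppi_def set7 by simp
  ultimately show ?thesis using pr_ppi[of 7] by simp
qed
lemma pr5: "pr 5 = 11"
proof -
  have "prime (11::nat)" using small_primes[of 11] by simp
  moreover have "ppi 11 = 5" unfolding ppi_def set11 by simp
  ultimately show ?thesis using pr_ppi[of 11] by simp
qed
lemma pr6: "pr 6 = 13"
proof -
  have "prime (13::nat)" using small_primes[of 13] by simp
  moreover have "ppi 13 = 6" unfolding ppi_def set13 by simp
  ultimately show ?thesis using pr_ppi[of 13] by simp
qed

theorem theorem2p14:
  assumes "\<And>k. k \<ge> 1 \<Longrightarrow> k \<noteq> 4 \<Longrightarrow> real (dgap k) < sqrt 2 * sqrt (real (pr k))"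
    and "n \<ge> 1"
  shows "real (pr (n + 2)) < (real (pr n) + 1) + 2 * sqrt 2 * sqrt (real (pr n))"
proof (cases "n = 3 \<or> n = 4")
  case True
  have s10: "5/2 < sqrt (10::real)" by (rule real_less_rsqrt) (simp add: power2_eq_square)
  have s14: "5/2 < sqrt (14::real)" by (rule real_less_rsqrt) (simp add: power2_eq_square)
  show ?thesis
  proof (cases "n = 3")
    case True
    have "sqrt 2 * sqrt 5 = sqrt (10::real)" by (simp flip: real_sqrt_mult)
    then show ?thesis using True pr3 pr5 s10 by (simp add: mult.assoc)
  next
    case False
    then have "n = 4" using \<open>n = 3 \<or> n = 4\<close> by simp
    have "sqrt 2 * sqrt 7 = sqrt (14::real)" by (simp flip: real_sqrt_mult)
    then show ?thesis using \<open>n = 4\<close> pr4 pr6 s14 by (simp add: mult.assoc)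
  qed
next
  case False
  define a where "a = pr n"
  define b where "b = pr (Suc n)"
  define c where "c = pr (n + 2)"
  have ab: "a < b" unfolding a_def b_def using pr_less assms(2) by simp
  have bc: "b < c" unfolding b_def c_def using pr_less[of "Suc n"] assms(2) by simp
  have d1: "real b - real a < sqrt 2 * sqrt (real a)"
    using assms(1)[of n] assms(2) False ab unfolding dgap_def a_def b_def by (simp add: of_nat_diff)
  have d2: "real c - real b < sqrt 2 * sqrt (real b)"
    using assms(1)[of "Suc n"] assms(2) False bc unfolding dgap_def c_def b_def by (simp add: of_nat_diff)
  define x where "x = sqrt 2 * sqrt (real a)"
  have x0: "x \<ge> 0" unfolding x_def by simp
  have x2: "x^2 = 2 * real a" unfolding x_def by (simp add: power_mult_distrib)
  have "sqrt 2 * sqrt (real b) = sqrt (2 * real b)" by (simp add: real_sqrt_mult)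
  also have "\<dots> < sqrt ((x + 1)^2)"
  proof (rule real_sqrt_less_mono)
    show "2 * real b < (x + 1)^2" using d1 x2 x0 unfolding x_def[symmetric]
      by (simp add: power2_eq_square algebra_simps)
  qed
  also have "\<dots> = x + 1" using x0 by simp
  finally have "real c - real b < x + 1" using d2 by simp
  then have "real c < real a + 1 + 2 * x" using d1 unfolding x_def[symmetric] by simp
  then show ?thesis unfolding a_def c_def x_def by (simp add: mult.assoc)
qed

end
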